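(* Fix $\alpha\in(0,1)$ and $\delta\ge 0$. For each integer $m$ (large enough that $m'\ge 2$) let $m'=\lfloor\alpha m\rfloor$ and define $h_\delta(i)$ for integers $i\ge m'$ by $h_\delta(m')=1$ and, for $i>m'$, $$h_\delta(i)=\Big(1-\frac2i\Big)h_\delta(i-1)+\frac{\delta}{i}\cdot\frac{m'(m'-1)}{(i-1)(i-2)}\Big[1-\frac{m'}{i-1}\Big].$$ Then $$\liminf_{m\to\infty}\frac1m\sum_{i=m'+1}^{m}h_\delta(i)\ \ge\ \alpha-\alpha^2+\delta\alpha^2\ln\alpha+\frac{\delta}{2}\left(\alpha-\alpha^3\right).$$ *)

theory Defs
  imports "HOL-Analysis.Analysis"
begin

definition mprime :: "real \<Rightarrow> nat \<Rightarrow> nat" where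
  "mprime \<alpha> m = nat \<lfloor>\<alpha> * real m\<rfloor>"

fun hrec :: "real \<Rightarrow> nat \<Rightarrow> nat \<Rightarrow> real" where
  "hrec d mp 0 = 1"
| "hrec d mp (Suc k) =
     (let i = real (mp + Suc k) in
       (1 - 2 / i) * hrec d mp k
       + d / i * (real mp * (real mp - 1) / ((i - 1) * (i - 2))) * (1 - real mp / (i - 1)))"

definition hdelta :: "real \<Rightarrow> nat \<Rightarrow> nat \<Rightarrow> real" where
  "hdelta d mp i = hrec d mp (i - mp)"

end

theory Submission
  imports Defs
begin

lemma aux: "(c::real) \<ge> 0 \<Longrightarrow> X \<le> Y + Z \<Longrightarrow> c*(1+X) \<le> c*(1+Y) + c*Z"
  by (metis add_le_cancel_left add.assoc distrib_left mult_left_mono)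

lemma hrec_lb:
  assumes n2: "n \<ge> 2" and d: "d \<ge> 0"
  shows "(real n + real k)*(real n + real k - 1) * hrec d n k \<ge> real n*(real n - 1)*(1 + d*(ln((real n + real k - 1)/(real n - 1)) + real n/(real n + real k - 1) - real n/(real n - 1)))"
proof (induction k)
  case 0 show ?case by simp
next
  case (Suc k)
  define N where "N = real n"
  define a where "a = N + real k"
  have N2: "N \<ge> 2" using n2 by (simp add: N_def)
  have aN: "a \<ge> N" by (simp add: a_def)
  have hi: "real (n + Suc k) = a+1" by (simp add: a_def N_def)
  have rec0: "hrec d n (Suc k) = (1 - 2/(a+1)) * hrec d n k + d/(a+1) * (N*(N-1)/(((a+1)-1)*((a+1)-2))) * (1 - N/((a+1)-1))"
    unfolding hrec.simps Let_def hi N_def ..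
  have rec: "hrec d n (Suc k) = (1 - 2/(a+1)) * hrec d n k + d/(a+1) * (N*(N-1)/(a*(a-1))) * (1 - N/a)"
    unfolding rec0 by (simp add: algebra_simps)
  have eq: "(a+1)*a*hrec d n (Suc k) = a*(a-1)*hrec d n k + d*N*(N-1)*(a-N)/(a*(a-1))"
  proof -
    have a0: "a \<noteq> 0" and a1: "a + 1 \<noteq> 0" using N2 aN by auto
    have e1: "(a+1)*a*((1 - 2/(a+1)) * hrec d n k) = a*(a-1)*hrec d n k"
      using a1 by (simp add: field_simps)
    have f1: "(a+1)*(d/(a+1)) = d" using a1 by simp
    have f2: "a*(1 - N/a) = a - N" using a0 by (simp add: right_diff_distrib)
    have e2: "(a+1)*a*(d/(a+1) * X * (1 - N/a)) = d*X*(a-N)" for X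
    proof -
      have "(a+1)*a*(d/(a+1) * X * (1 - N/a)) = ((a+1)*(d/(a+1))) * X * (a*(1 - N/a))"
        by (simp only: ac_simps)
      then show ?thesis unfolding f1 f2 .
    qed
    show ?thesis unfolding rec distrib_left e1 e2 by simp
  qed
  have IH: "a*(a-1)*hrec d n k \<ge> N*(N-1)*(1 + d*(ln((a - 1)/(N - 1)) + N/(a - 1) - N/(N - 1)))"
    using Suc.IH by (simp add: a_def N_def)
  have kk: "(a-N)/(a*(a-1)) = N/a - (N-1)/(a-1)"
    using N2 aN by (simp add: field_simps)
  have lnq: "ln (a/(N-1)) - ln((a-1)/(N-1)) \<le> 1/(a-1)"
  proof -
    have "ln (a/(N-1)) - ln((a-1)/(N-1)) = ln (1 + 1/(a-1))"
      using N2 aN by (simp add: ln_div field_simps)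
    also have "\<dots> \<le> 1/(a-1)" by (rule ln_add_one_self_le_self) (use N2 aN in simp)
    finally show ?thesis .
  qed
  have main: "N*(N-1)*(1 + d*(ln(a/(N - 1)) + N/a - N/(N - 1)))
      \<le> N*(N-1)*(1 + d*(ln((a - 1)/(N - 1)) + N/(a - 1) - N/(N - 1))) + N*(N-1)*(d*(N/a - (N-1)/(a-1)))"
  proof -
    have "d*(ln(a/(N - 1)) + N/a - N/(N - 1)) \<le> d*(ln((a - 1)/(N - 1)) + N/(a - 1) - N/(N - 1)) + d*(N/a - (N-1)/(a-1))"
    proof -
      have "ln(a/(N - 1)) + N/a - N/(N - 1) \<le> (ln((a - 1)/(N - 1)) + N/(a - 1) - N/(N - 1)) + (N/a - (N-1)/(a-1))"
      proof -
        have "N/(a-1) - (N-1)/(a-1) = 1/(a-1)" by (simp add: diff_divide_distrib[symmetric])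
        then show ?thesis using lnq by linarith
      qed
      then show ?thesis using d by (metis distrib_left mult_left_mono)
    qed
    moreover have "N*(N-1) \<ge> 0" using N2 by simp
    ultimately show ?thesis by (metis aux)
  qed
  have kk2: "d*N*(N-1)*(a-N)/(a*(a-1)) = N*(N-1)*(d*(N/a - (N-1)/(a-1)))"
    using kk by (metis (no_types, opaque_lifting) mult.assoc mult.commute times_divide_eq_right)
  have fin: "(a+1)*a*hrec d n (Suc k) \<ge> N*(N-1)*(1 + d*(ln(a/(N - 1)) + N/a - N/(N - 1)))"
    using main IH unfolding eq kk2 by linarith
  have r1: "real n + real (Suc k) = a + 1" by (simp add: a_def N_def)
  show ?case unfolding r1 using fin by (simp add: N_def)
qed

definition GG :: "real \<Rightarrow> real \<Rightarrow> real" where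
  "GG d x = (1 + d*(ln x + 1/x - 1))/x^2"

lemma h_lb:
  assumes n2: "n \<ge> 2" and d: "d \<ge> 0" and i: "n + 1 \<le> i"
  shows "hdelta d n i \<ge> ((real n - 1)/real n)^2 * GG d (real i / real n) - d/(real n - 1)"
proof -
  define N where "N = real n"
  define I where "I = real i"
  define h where "h = hdelta d n i"
  have N2: "N \<ge> 2" using n2 by (simp add: N_def)
  have IN: "I \<ge> N + 1" using i by (simp add: I_def N_def)
  have A: "I*(I-1)*h \<ge> N*(N-1)*(1 + d*(ln((I-1)/(N-1)) + N/(I-1) - N/(N-1)))"
  proof -
    have "real n + real (i - n) = I" using i by (simp add: I_def)
    then show ?thesis using hrec_lb[OF n2 d, of "i - n"] by (simp add: h_def hdelta_def N_def)
  qed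
  define S where "S = ln((I-1)/(N-1)) + N/(I-1) - N/(N-1)"
  define phi where "phi = ln(I/N) + N/I - 1"
  have S_lb: "S \<ge> phi - 1/(N-1)"
  proof -
    have "I/N \<le> (I-1)/(N-1)" using N2 IN by (simp add: field_simps)
    then have l1: "ln(I/N) \<le> ln((I-1)/(N-1))" using N2 IN by simp
    have l2: "N/I \<le> N/(I-1)" using N2 IN by (simp add: frac_le)
    have l3: "N/(N-1) = 1 + 1/(N-1)" using N2 by (simp add: field_simps)
    show ?thesis unfolding S_def phi_def l3 using l1 l2 by linarith
  qed
  have phi0: "phi \<ge> 0"
  proof -
    have "ln(N/I) \<le> N/I - 1" using N2 IN by (intro ln_le_minus_one) simp
    moreover have "ln(N/I) = - ln(I/N)" using N2 IN by (simp add: ln_div)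
    ultimately show ?thesis unfolding phi_def by linarith
  qed
  define c where "c = N*(N-1)/(I*(I-1))"
  define c' where "c' = (N-1)^2/I^2"
  have Ipos: "I*(I-1) > 0" using N2 IN by simp
  have hc: "h \<ge> c*(1+d*S)"
    using A Ipos unfolding c_def S_def by (simp add: pos_divide_le_eq mult.commute)
  have c0: "c \<ge> 0" using N2 Ipos unfolding c_def by simp
  have c1: "c \<le> 1"
  proof -
    have "N*(N-1) \<le> I*(I-1)" using N2 IN by (intro mult_mono) auto
    then show ?thesis using Ipos unfolding c_def by simp
  qed
  have c'c: "c' \<le> c"
  proof -
    have "(N-1)*(I-1) \<le> N*I" using N2 IN by (intro mult_mono) auto
    then have "(N-1)*(I-1)*((N-1)*I) \<le> N*I*((N-1)*I)" using N2 IN by (intro mult_right_mono) auto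
    then have "(N-1)^2*(I*(I-1)) \<le> N*(N-1)*I^2" by (simp add: power2_eq_square algebra_simps)
    then show ?thesis unfolding c_def c'_def using Ipos N2 IN
      by (simp add: divide_le_eq le_divide_eq)
  qed
  have Q0: "1 + d*phi \<ge> 0" using d phi0 by simp
  have "h \<ge> c*(1 + d*phi) - c*(d/(N-1))"
  proof -
    have "1+d*S \<ge> 1 + d*phi - d/(N-1)"
      using mult_left_mono[OF S_lb d] by (simp add: algebra_simps)
    then have "c*(1+d*S) \<ge> c*(1 + d*phi - d/(N-1))" using c0 by (rule mult_left_mono)
    then show ?thesis using hc by (simp add: algebra_simps)
  qed
  moreover have "c*(d/(N-1)) \<le> d/(N-1)" using c0 c1 d N2 by (intro mult_left_le_one_le) auto
  moreover have "c*(1 + d*phi) \<ge> c'*(1 + d*phi)" using c'c Q0 by (rule mult_right_mono)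
  moreover have "c'*(1 + d*phi) = ((N-1)/N)^2 * GG d (I/N)"
    unfolding c'_def GG_def phi_def using N2 IN by (simp add: field_simps)
  ultimately show ?thesis unfolding h_def N_def I_def by linarith
qed

definition Psi :: "real \<Rightarrow> real \<Rightarrow> real" where
  "Psi d x = -1/x - d*ln x/x - d/(2*x^2)"

definition GG' :: "real \<Rightarrow> real \<Rightarrow> real" where
  "GG' d x = (-2*x + 3*d*x - 2*d*x*ln x - 3*d)/x^4"

lemma Psi_deriv: "x > 0 \<Longrightarrow> DERIV (Psi d) x :> GG d x"
  unfolding Psi_def GG_def
  by (auto intro!: derivative_eq_intros simp: field_simps power2_eq_square)

lemma GG_deriv: "x > 0 \<Longrightarrow> DERIV (GG d) x :> GG' d x"
  unfolding GG'_def GG_def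
  by (auto intro!: derivative_eq_intros simp: field_simps eval_nat_numeral)

lemma GG'_lb:
  assumes x1: "x \<ge> 1" and d: "d \<ge> 0"
  shows "GG' d x \<ge> -(2+5*d)"
proof -
  have p1: "x^1 \<le> x^4" using x1 by (intro power_increasing) auto
  have p2: "x^2 \<le> x^4" using x1 by (intro power_increasing) auto
  have p0: "1 \<le> x^4" using x1 by simp
  have lx: "ln x \<le> x" using ln_le_minus_one[of x] x1 by simp
  have lx0: "ln x \<ge> 0" using x1 by simp
  have xl: "x * ln x \<le> x^2" using mult_left_mono[OF lx, of x] x1 by (simp add: power2_eq_square)
  have "d*(x*ln x) \<le> d*x^4" using xl p2 d by (meson mult_left_mono order.trans)
  moreover have "d*1 \<le> d*x^4" using p0 d by (rule mult_left_mono)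
  moreover have "0 \<le> d*x" using d x1 by simp
  ultimately have num: "-2*x + 3*d*x - 2*d*x*ln x - 3*d \<ge> -(2+5*d)*x^4"
    using p1 by (simp add: algebra_simps)
  have "x^4 > 0" using x1 by simp
  then show ?thesis unfolding GG'_def using num by (simp add: pos_le_divide_eq)
qed

lemma GG_step:
  assumes N1: "N > 0" and t: "(t-1)/N \<ge> 1" and d: "d \<ge> 0"
  shows "GG d (t/N) \<ge> N*(Psi d (t/N) - Psi d ((t-1)/N)) - (2+5*d)/N"
proof -
  define a where "a = (t-1)/N"
  define b where "b = t/N"
  have ab: "b - a = 1/N" unfolding a_def b_def by (simp add: diff_divide_distrib[symmetric])
  have a1: "a \<ge> 1" using t by (simp add: a_def)
  have "1/N > 0" using N1 by simp
  then have "a < b" using ab by linarith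
  from MVT2[OF this, of "Psi d" "GG d"] obtain z where z: "a < z" "z < b"
    and ez: "Psi d b - Psi d a = (b - a) * GG d z"
    using a1 Psi_deriv by force
  from MVT2[OF \<open>z < b\<close>, of "GG d" "GG' d"] obtain w where w: "z < w" "w < b"
    and ew: "GG d b - GG d z = (b - z) * GG' d w"
    using a1 z GG_deriv by force
  have "N*(Psi d b - Psi d a) = GG d z" using ez ab N1 by simp
  moreover have "(b - z) * GG' d w \<ge> -(2+5*d)/N"
  proof -
    have g: "GG' d w \<ge> -(2+5*d)" using GG'_lb[of w d] a1 z w d by simp
    have "(b-z)*GG' d w \<ge> (b-z)*(-(2+5*d))" using g z by (intro mult_left_mono) auto
    moreover have "(b-z)*(-(2+5*d)) \<ge> (1/N)*(-(2+5*d))"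
      using z ab d by (intro mult_right_mono_neg) auto
    ultimately show ?thesis by simp
  qed
  ultimately show ?thesis using ew unfolding a_def b_def by linarith
qed

lemma GG_sum:
  assumes n1: "n \<ge> 1" and d: "d \<ge> 0"
  shows "(\<Sum>i\<in>{n+1..n+k}. GG d (real i / real n)) \<ge>
     real n * (Psi d (real (n+k) / real n) - Psi d 1) - real k * (2+5*d) / real n"
proof (induction k)
  case 0
  then show ?case using n1 by simp
next
  case (Suc k)
  have st: "GG d (real (n + Suc k) / real n) \<ge> real n*(Psi d (real (n + Suc k)/real n) - Psi d ((real (n + Suc k)-1)/real n)) - (2+5*d)/real n"
    using n1 d by (intro GG_step) (auto simp: field_simps)
  have e: "real (n + Suc k) - 1 = real (n + k)" by simp
  show ?case using Suc.IH st unfolding e by (simp add: algebra_simps add_divide_distrib)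
qed

definition RR :: "real \<Rightarrow> real \<Rightarrow> real \<Rightarrow> real" where
  "RR d N mm = ((N-1)/N)^2 * ((N*(Psi d (mm/N) - Psi d 1) - (mm - N)*(2+5*d)/N)/mm) - (mm-N)*d/((N-1)*mm)"

lemma avg_lb:
  assumes n2: "n \<ge> 2" and nm: "n \<le> m" and d: "d \<ge> 0"
  shows "(1 / real m) * (\<Sum>i\<in>{n + 1..m}. hdelta d n i) \<ge> RR d (real n) (real m)"
proof -
  define N where "N = real n"
  define K where "K = ((N-1)/N)^2"
  obtain k where mk: "m = n + k" using nm le_Suc_ex by blast
  have N2: "N \<ge> 2" using n2 by (simp add: N_def)
  have s1: "(\<Sum>i\<in>{n + 1..m}. hdelta d n i) \<ge> (\<Sum>i\<in>{n + 1..m}. K * GG d (real i / N) - d/(N-1))"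
    using h_lb[OF n2 d] by (intro sum_mono) (auto simp: K_def N_def)
  have s2: "(\<Sum>i\<in>{n + 1..m}. K * GG d (real i / N) - d/(N-1)) = K * (\<Sum>i\<in>{n + 1..m}. GG d (real i / N)) - real k * (d/(N-1))"
    by (simp add: sum_subtractf sum_distrib_left mk)
  have s3: "K * (\<Sum>i\<in>{n + 1..m}. GG d (real i / N)) \<ge> K * (N * (Psi d (real m / N) - Psi d 1) - real k * (2+5*d) / N)"
    using GG_sum[of n d k] n2 d unfolding mk N_def K_def by (intro mult_left_mono) auto
  have S: "(\<Sum>i\<in>{n + 1..m}. hdelta d n i) \<ge> K * (N * (Psi d (real m / N) - Psi d 1) - real k * (2+5*d) / N) - real k * (d/(N-1))"
    using s1 s2 s3 by linarith
  have m0: "real m > 0" using n2 nm by simp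
  have rk: "real k = real m - N" by (simp add: mk N_def)
  have "RR d N (real m) = (K * (N * (Psi d (real m / N) - Psi d 1) - real k * (2+5*d) / N) - real k * (d/(N-1))) / real m"
    unfolding RR_def K_def rk using m0 N2 by (simp add: field_simps)
  then show ?thesis using S m0 unfolding N_def[symmetric]
    by (simp add: divide_right_mono)
qed

lemma RR_alt:
  assumes N2: "N \<ge> 2" and m0: "mm > 0"
  shows "RR d N mm = ((N/mm - 1/mm)/(N/mm))^2 * ((N/mm)*(Psi d (1/(N/mm)) - Psi d 1) - (1-N/mm)*(2+5*d)*(1/mm)/(N/mm)) - (1-N/mm)*d*(1/mm)/(N/mm - 1/mm)"
proof -
  have e1: "(N/mm - 1/mm)/(N/mm) = (N-1)/N" using N2 m0 by (simp add: field_simps)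
  have e2: "1/(N/mm) = mm/N" by simp
  have e3: "(N/mm)*P - (1-N/mm)*c*(1/mm)/(N/mm) = (N*P - (mm - N)*c/N)/mm" for P c
    using N2 m0 by (simp add: field_simps)
  have e4: "(1-N/mm)*d*(1/mm)/(N/mm - 1/mm) = (mm-N)*d/((N-1)*mm)"
    using N2 m0 by (simp add: field_simps)
  show ?thesis unfolding RR_def e1 e2 e3 e4 ..
qed

theorem lemma4p8:
  fixes \<alpha> \<delta> :: real
  assumes "0 < \<alpha>" and "\<alpha> < 1" and "0 \<le> \<delta>"
  shows "liminf (\<lambda>m::nat. ereal ((1 / real m) *
            (\<Sum>i\<in>{mprime \<alpha> m + 1..m}. hdelta \<delta> (mprime \<alpha> m) i)))
         \<ge> ereal (\<alpha> - \<alpha>^2 + \<delta> * \<alpha>^2 * ln \<alpha> + \<delta> / 2 * (\<alpha> - \<alpha>^3))"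
proof -
  note a0 = assms(1) and a1 = assms(2) and d = assms(3)
  define L where "L = \<alpha> - \<alpha>^2 + \<delta> * \<alpha>^2 * ln \<alpha> + \<delta> / 2 * (\<alpha> - \<alpha>^3)"
  define r where "r = (\<lambda>m::nat. real (mprime \<alpha> m) / real m)"
  define u where "u = (\<lambda>m::nat. 1 / real m)"
  define F where "F = (\<lambda>r u. ((r-u)/r)^2 * (r*(Psi \<delta> (1/r) - Psi \<delta> 1) - (1-r)*(2+5*\<delta>)*u/r) - (1-r)*\<delta>*u/(r-u))"
  have Nfl: "real (mprime \<alpha> m) = of_int \<lfloor>\<alpha> * real m\<rfloor>" for m
    unfolding mprime_def using a0 by simp
  have u0: "u \<longlonglongrightarrow> 0" unfolding u_def by (rule lim_const_over_n)
  have rlim: "r \<longlonglongrightarrow> \<alpha>"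
  proof (rule tendsto_sandwich[of "\<lambda>m. \<alpha> - u m" _ _ "\<lambda>m. \<alpha>"])
    show "\<forall>\<^sub>F m in sequentially. \<alpha> - u m \<le> r m"
      using eventually_gt_at_top[of 0]
    proof eventually_elim
      case (elim m)
      have "\<alpha> * real m - 1 \<le> of_int \<lfloor>\<alpha> * real m\<rfloor>" by linarith
      then have "(\<alpha> * real m - 1) / real m \<le> of_int \<lfloor>\<alpha> * real m\<rfloor> / real m"
        by (intro divide_right_mono) auto
      moreover have "(\<alpha> * real m - 1) / real m = \<alpha> - 1 / real m" using elim by (simp add: field_simps)
      ultimately show ?case unfolding r_def u_def Nfl by simp
    qed
    show "\<forall>\<^sub>F m in sequentially. r m \<le> \<alpha>"
      using eventually_gt_at_top[of 0]
    proof eventually_elim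
      case (elim m)
      have "of_int \<lfloor>\<alpha> * real m\<rfloor> \<le> \<alpha> * real m" by linarith
      then have "of_int \<lfloor>\<alpha> * real m\<rfloor> / real m \<le> \<alpha> * real m / real m"
        by (intro divide_right_mono) auto
      then show ?case using elim unfolding r_def u_def Nfl by simp
    qed
    show "(\<lambda>m. \<alpha> - u m) \<longlonglongrightarrow> \<alpha>" using u0 tendsto_diff[OF tendsto_const u0, of \<alpha>] by simp
    show "(\<lambda>m. \<alpha>) \<longlonglongrightarrow> \<alpha>" by simp
  qed
  have Flim: "(\<lambda>m. F (r m) (u m)) \<longlonglongrightarrow> F \<alpha> 0"
    unfolding F_def Psi_def using a0 a1
    by (intro tendsto_intros rlim u0) auto
  have FL: "F \<alpha> 0 = L"
    unfolding F_def Psi_def L_def using a0 by (simp add: ln_div field_simps power2_eq_square power3_eq_cube)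
  have ev: "\<forall>\<^sub>F m in sequentially. ereal (F (r m) (u m)) \<le> ereal ((1 / real m) *
            (\<Sum>i\<in>{mprime \<alpha> m + 1..m}. hdelta \<delta> (mprime \<alpha> m) i))"
    using eventually_ge_at_top[of "nat \<lceil>2/\<alpha>\<rceil> + 1"]
  proof eventually_elim
    case (elim m)
    have m0: "real m > 0" using elim by simp
    have "real m \<ge> 2/\<alpha>" using elim by linarith
    then have am: "\<alpha> * real m \<ge> 2" using a0 by (simp add: field_simps)
    then have n2: "mprime \<alpha> m \<ge> 2" unfolding mprime_def by linarith
    have "\<alpha> * real m \<le> real m" using a1 m0 by simp
    then have nm: "mprime \<alpha> m \<le> m" unfolding mprime_def by linarith
    have "F (r m) (u m) = RR \<delta> (real (mprime \<alpha> m)) (real m)"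
      unfolding F_def r_def u_def using RR_alt[of "real (mprime \<alpha> m)" "real m" \<delta>] m0 n2 by simp
    then show ?case using avg_lb[OF n2 nm d] by simp
  qed
  have "liminf (\<lambda>m. ereal (F (r m) (u m))) = ereal L"
    using Flim FL by (intro lim_imp_Liminf) auto
  moreover have "liminf (\<lambda>m. ereal (F (r m) (u m))) \<le> liminf (\<lambda>m::nat. ereal ((1 / real m) *
            (\<Sum>i\<in>{mprime \<alpha> m + 1..m}. hdelta \<delta> (mprime \<alpha> m) i)))"
    using ev by (rule Liminf_mono)
  ultimately show ?thesis unfolding L_def by simp
qed

end
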